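(* Let $(X,d)$ be a compact metric space, $T:X\to X$ continuous, $Z\subset X$ non-empty, and $\Phi=\{\varphi_n:X\to\mathbb{R}\}_{n\in\mathbb{N}}$ a sequence of continuous functions satisfying the tempered distortion condition $\lim_{\varepsilon\to 0}\limsup_{n\to\infty}\varphi_n(\varepsilon)/n=0$, where $\varphi_n(\varepsilon)=\sup\{|\varphi_n(x)-\varphi_n(y)|: x\in X,\ y\in B_n(x,e^{-n\varepsilon})\}$. Then $$P^{\tilde B}_Z(T,\Phi)=\lim_{\varepsilon\to0}\tilde M_\varepsilon(Z,\Phi).$$
   Context: The neutralized Bowen ball is $B_n(x,e^{-n\varepsilon})=\{y\in X: d(T^jx,T^jy)<e^{-n\varepsilon}\ \forall\,0\le j\le n-1\}$. For $\varepsilon>0$, $N\in\mathbb{N}$, $s\in\mathbb{R}$, let $M^s_{N,\varepsilon}(Z,\Phi)=\inf\sum_{i\in I}\exp[-n_is+\sup_{y\in B_{n_i}(x_i,e^{-n_i\varepsilon})}\varphi_{n_i}(y)]$, the infimum over all finite or countable covers $\{B_{n_i}(x_i,e^{-n_i\varepsilon})\}_{i\in I}$ of $Z$ with $n_i\ge N$, $x_i\in X$; $M^s_\varepsilon=\lim_{N\to\infty}M^s_{N,\varepsilon}$; $M_\varepsilon(Z,\Phi)=\inf\{s:M^s_\varepsilon(Z,\Phi)=0\}=\sup\{s:M^s_\varepsilon(Z,\Phi)=\infty\}$; $P^{\tilde B}_Z(T,\Phi)=\lim_{\varepsilon\to0}M_\varepsilon(Z,\Phi)$. The quantities $\tilde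 M^s_{N,\varepsilon}(Z,\Phi)$, $\tilde M^s_\varepsilon(Z,\Phi)$, $\tilde M_\varepsilon(Z,\Phi)$ are defined in exactly the same way except that, in the sum, $\sup_{y\in B_{n_i}(x_i,e^{-n_i\varepsilon})}\varphi_{n_i}(y)$ is replaced by $\varphi_{n_i}(z_i)$ for a point $z_i\in B_{n_i}(x_i,e^{-n_i\varepsilon})$ chosen in each ball of the cover. *)

theory Defs
  imports "HOL-Analysis.Analysis"
begin

definition bowen_ball :: "'a::metric_space set \<Rightarrow> ('a \<Rightarrow> 'a) \<Rightarrow> nat \<Rightarrow> 'a \<Rightarrow> real \<Rightarrow> 'a set" where
  "bowen_ball X T n x eps =
     {y \<in> X. \<forall>j<n. dist ((T ^^ j) x) ((T ^^ j) y) < exp (- real n * eps)}"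

definition distortion :: "'a::metric_space set \<Rightarrow> ('a \<Rightarrow> 'a) \<Rightarrow> (nat \<Rightarrow> 'a \<Rightarrow> real) \<Rightarrow> nat \<Rightarrow> real \<Rightarrow> real" where
  "distortion X T \<phi> n eps =
     Sup {\<bar>\<phi> n x - \<phi> n y\<bar> | x y. x \<in> X \<and> y \<in> bowen_ball X T n x eps}"

definition tempered_distortion :: "'a::metric_space set \<Rightarrow> ('a \<Rightarrow> 'a) \<Rightarrow> (nat \<Rightarrow> 'a \<Rightarrow> real) \<Rightarrow> bool" where
  "tempered_distortion X T \<phi> \<longleftrightarrow>
     ((\<lambda>eps. limsup (\<lambda>n. ereal (distortion X T \<phi> n eps / real n))) \<longlongrightarrow> 0) (at_right 0)"

text \<open>Admissible covers: a finite or countable index set I (w.l.o.g. a subset of nat),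
  lengths n_i \<ge> N and centres x_i \<in> X, with the Bowen balls covering Z.\<close>
definition is_cover :: "'a::metric_space set \<Rightarrow> ('a \<Rightarrow> 'a) \<Rightarrow> 'a set \<Rightarrow> nat \<Rightarrow> real
    \<Rightarrow> nat set \<Rightarrow> (nat \<Rightarrow> nat) \<Rightarrow> (nat \<Rightarrow> 'a) \<Rightarrow> bool" where
  "is_cover X T Z N eps I n x \<longleftrightarrow>
     (\<forall>i\<in>I. N \<le> n i \<and> x i \<in> X) \<and> Z \<subseteq> (\<Union>i\<in>I. bowen_ball X T (n i) (x i) eps)"

definition MsN :: "'a::metric_space set \<Rightarrow> ('a \<Rightarrow> 'a) \<Rightarrow> (nat \<Rightarrow> 'a \<Rightarrow> real) \<Rightarrow> 'a set
    \<Rightarrow> real \<Rightarrow> nat \<Rightarrow> real \<Rightarrow> ennreal" where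
  "MsN X T \<phi> Z s N eps =
     (INF (I, n, x) \<in> {(I, n, x). is_cover X T Z N eps I n x}.
        \<Sum>i. (if i \<in> I then ennreal (exp (- real (n i) * s
               + (SUP y \<in> bowen_ball X T (n i) (x i) eps. \<phi> (n i) y))) else 0))"

definition tMsN :: "'a::metric_space set \<Rightarrow> ('a \<Rightarrow> 'a) \<Rightarrow> (nat \<Rightarrow> 'a \<Rightarrow> real) \<Rightarrow> 'a set
    \<Rightarrow> real \<Rightarrow> nat \<Rightarrow> real \<Rightarrow> ennreal" where
  "tMsN X T \<phi> Z s N eps =
     (INF (I, n, x, z) \<in> {(I, n, x, z). is_cover X T Z N eps I n x
                              \<and> (\<forall>i\<in>I. z i \<in> bowen_ball X T (n i) (x i) eps)}.
        \<Sum>i. (if i \<in> I then ennreal (exp (- real (n i) * s + \<phi> (n i) (z i))) else 0))"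

definition Ms :: "'a::metric_space set \<Rightarrow> ('a \<Rightarrow> 'a) \<Rightarrow> (nat \<Rightarrow> 'a \<Rightarrow> real) \<Rightarrow> 'a set
    \<Rightarrow> real \<Rightarrow> real \<Rightarrow> ennreal" where
  "Ms X T \<phi> Z s eps = lim (\<lambda>N. MsN X T \<phi> Z s N eps)"

definition tMs :: "'a::metric_space set \<Rightarrow> ('a \<Rightarrow> 'a) \<Rightarrow> (nat \<Rightarrow> 'a \<Rightarrow> real) \<Rightarrow> 'a set
    \<Rightarrow> real \<Rightarrow> real \<Rightarrow> ennreal" where
  "tMs X T \<phi> Z s eps = lim (\<lambda>N. tMsN X T \<phi> Z s N eps)"

definition Meps :: "'a::metric_space set \<Rightarrow> ('a \<Rightarrow> 'a) \<Rightarrow> (nat \<Rightarrow> 'a \<Rightarrow> real) \<Rightarrow> 'a set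
    \<Rightarrow> real \<Rightarrow> ereal" where
  "Meps X T \<phi> Z eps = Inf {ereal s | s. Ms X T \<phi> Z s eps = 0}"

definition tMeps :: "'a::metric_space set \<Rightarrow> ('a \<Rightarrow> 'a) \<Rightarrow> (nat \<Rightarrow> 'a \<Rightarrow> real) \<Rightarrow> 'a set
    \<Rightarrow> real \<Rightarrow> ereal" where
  "tMeps X T \<phi> Z eps = Inf {ereal s | s. tMs X T \<phi> Z s eps = 0}"

definition pressure_tB :: "'a::metric_space set \<Rightarrow> ('a \<Rightarrow> 'a) \<Rightarrow> (nat \<Rightarrow> 'a \<Rightarrow> real) \<Rightarrow> 'a set \<Rightarrow> ereal" where
  "pressure_tB X T \<phi> Z = Lim (at_right 0) (\<lambda>eps. Meps X T \<phi> Z eps)"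

end

theory Submission
  imports Defs
begin

lemma ball_mono:
  assumes "e1 \<le> e2"
  shows "bowen_ball X T n x e2 \<subseteq> bowen_ball X T n x e1"
proof -
  have "exp (- real n * e2) \<le> exp (- real n * e1)"
    using assms by (simp add: mult_left_mono)
  then show ?thesis unfolding bowen_ball_def by (auto intro: less_le_trans)
qed

lemma center_in_ball: "x \<in> X \<Longrightarrow> x \<in> bowen_ball X T n x e"
  unfolding bowen_ball_def by simp

lemma ball_sub: "bowen_ball X T n x e \<subseteq> X"
  unfolding bowen_ball_def by auto

lemma bounded_fun:
  assumes "compact X" "continuous_on X f"
  shows "\<exists>B. \<forall>x\<in>X. \<bar>f x\<bar> \<le> (B::real)"
proof -
  have "bounded (f ` X)"
    using compact_continuous_image[OF assms(2,1)] compact_imp_bounded by blast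
  then show ?thesis unfolding bounded_iff by auto
qed

lemma bdd_fun:
  assumes "compact X" "continuous_on X (f::_ \<Rightarrow> real)" "S \<subseteq> X"
  shows "bdd_above (f ` S)"
proof -
  obtain B where "\<forall>x\<in>X. \<bar>f x\<bar> \<le> B" using bounded_fun[OF assms(1,2)] by blast
  then show ?thesis using assms(3) by (intro bdd_aboveI[of _ B]) force
qed

lemma dist_bound:
  assumes "compact X" "continuous_on X (\<phi> n)" "x \<in> X" "y \<in> bowen_ball X T n x e"
  shows "\<bar>\<phi> n x - \<phi> n y\<bar> \<le> distortion X T \<phi> n e"
proof -
  obtain B where B: "\<forall>x\<in>X. \<bar>\<phi> n x\<bar> \<le> B" using bounded_fun[OF assms(1,2)] by blast
  have "bdd_above {\<bar>\<phi> n x - \<phi> n y\<bar> | x y. x \<in> X \<and> y \<in> bowen_ball X T n x e}"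
  proof (rule bdd_aboveI[of _ "2*B"])
    fix v assume "v \<in> {\<bar>\<phi> n x - \<phi> n y\<bar> | x y. x \<in> X \<and> y \<in> bowen_ball X T n x e}"
    then obtain a b where "v = \<bar>\<phi> n a - \<phi> n b\<bar>" "a \<in> X" "b \<in> X"
      using ball_sub by blast
    moreover have "\<bar>\<phi> n a\<bar> \<le> B" "\<bar>\<phi> n b\<bar> \<le> B" using B \<open>a \<in> X\<close> \<open>b \<in> X\<close> by auto
    ultimately show "v \<le> 2*B" by arith
  qed
  then show ?thesis unfolding distortion_def
    by (rule cSup_upper[rotated]) (use assms in blast)
qed

lemma cover_mono_N:
  assumes "N \<le> M"
  shows "is_cover X T Z M e I n x \<Longrightarrow> is_cover X T Z N e I n x"
  unfolding is_cover_def using assms by force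

lemma tMsN_mono_N:
  assumes "N \<le> M"
  shows "tMsN X T \<phi> Z s N e \<le> tMsN X T \<phi> Z s M e"
  unfolding tMsN_def
  by (rule INF_superset_mono) (use cover_mono_N[OF assms] in auto)

lemma MsN_mono_N:
  assumes "N \<le> M"
  shows "MsN X T \<phi> Z s N e \<le> MsN X T \<phi> Z s M e"
  unfolding MsN_def
  by (rule INF_superset_mono) (use cover_mono_N[OF assms] in auto)

lemma tMs_lim: "(\<lambda>N. tMsN X T \<phi> Z s N e) \<longlonglongrightarrow> tMs X T \<phi> Z s e"
proof -
  have "incseq (\<lambda>N. tMsN X T \<phi> Z s N e)" by (simp add: incseq_def tMsN_mono_N)
  then have "(\<lambda>N. tMsN X T \<phi> Z s N e) \<longlonglongrightarrow> (SUP N. tMsN X T \<phi> Z s N e)" by (rule LIMSEQ_SUP)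
  then show ?thesis unfolding tMs_def by (simp add: limI)
qed

lemma Ms_lim: "(\<lambda>N. MsN X T \<phi> Z s N e) \<longlonglongrightarrow> Ms X T \<phi> Z s e"
proof -
  have "incseq (\<lambda>N. MsN X T \<phi> Z s N e)" by (simp add: incseq_def MsN_mono_N)
  then have "(\<lambda>N. MsN X T \<phi> Z s N e) \<longlonglongrightarrow> (SUP N. MsN X T \<phi> Z s N e)" by (rule LIMSEQ_SUP)
  then show ?thesis unfolding Ms_def by (simp add: limI)
qed

lemma tMsN_mono_eps:
  assumes "e1 \<le> e2"
  shows "tMsN X T \<phi> Z s N e1 \<le> tMsN X T \<phi> Z s N e2"
proof -
  have "is_cover X T Z N e1 I n x \<and> (\<forall>i\<in>I. z i \<in> bowen_ball X T (n i) (x i) e1)"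
    if "is_cover X T Z N e2 I n x" "\<forall>i\<in>I. z i \<in> bowen_ball X T (n i) (x i) e2" for I n x z
  proof -
    have sub: "\<And>i. bowen_ball X T (n i) (x i) e2 \<subseteq> bowen_ball X T (n i) (x i) e1"
      by (rule ball_mono[OF assms])
    have "Z \<subseteq> (\<Union>i\<in>I. bowen_ball X T (n i) (x i) e1)"
      using that(1) sub unfolding is_cover_def by (meson UN_mono order_refl order_trans)
    moreover have "\<forall>i\<in>I. z i \<in> bowen_ball X T (n i) (x i) e1" using that(2) sub by (meson subsetD)
    ultimately show ?thesis using that(1) unfolding is_cover_def by simp
  qed
  then show ?thesis unfolding tMsN_def
    by (intro INF_superset_mono) auto
qed

lemma tMeps_mono:
  assumes "e1 \<le> e2"
  shows "tMeps X T \<phi> Z e1 \<le> tMeps X T \<phi> Z e2"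
proof -
  have "tMs X T \<phi> Z s e1 \<le> tMs X T \<phi> Z s e2" for s
    by (rule LIMSEQ_le[OF tMs_lim tMs_lim]) (use tMsN_mono_eps[OF assms] in blast)
  then have "tMs X T \<phi> Z s e1 = 0" if "tMs X T \<phi> Z s e2 = 0" for s
    using that by (metis le_zero_eq)
  then have "{ereal s | s. tMs X T \<phi> Z s e2 = 0} \<subseteq> {ereal s | s. tMs X T \<phi> Z s e1 = 0}"
    by blast
  then show ?thesis unfolding tMeps_def by (rule Inf_superset_mono)
qed

lemma tMsN_le_MsN:
  assumes "compact X" "\<And>n. continuous_on X (\<phi> n)"
  shows "tMsN X T \<phi> Z s N e \<le> MsN X T \<phi> Z s N e"
  unfolding MsN_def
proof (rule INF_greatest, clarify)
  fix I n x assume cov: "is_cover X T Z N e I n x"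
  then have xX: "\<forall>i\<in>I. x i \<in> X" by (simp add: is_cover_def)
  have "tMsN X T \<phi> Z s N e \<le>
     (\<Sum>i. (if i \<in> I then ennreal (exp (- real (n i) * s + \<phi> (n i) (x i))) else 0))"
    unfolding tMsN_def
    by (rule INF_lower2[of "(I, n, x, x)"]) (use cov xX in \<open>auto intro: center_in_ball\<close>)
  also have "\<dots> \<le> (\<Sum>i. (if i \<in> I then ennreal (exp (- real (n i) * s
               + (SUP y \<in> bowen_ball X T (n i) (x i) e. \<phi> (n i) y))) else 0))"
  proof (rule suminf_le[OF _ summableI summableI])
    fix i show "(if i \<in> I then ennreal (exp (- real (n i) * s + \<phi> (n i) (x i))) else 0)
       \<le> (if i \<in> I then ennreal (exp (- real (n i) * s
               + (SUP y \<in> bowen_ball X T (n i) (x i) e. \<phi> (n i) y))) else 0)"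
    proof (cases "i \<in> I")
      case True
      have "\<phi> (n i) (x i) \<le> (SUP y \<in> bowen_ball X T (n i) (x i) e. \<phi> (n i) y)"
      proof (rule cSUP_upper)
        show "x i \<in> bowen_ball X T (n i) (x i) e" using True xX by (simp add: center_in_ball)
        show "bdd_above (\<phi> (n i) ` bowen_ball X T (n i) (x i) e)"
          by (rule bdd_fun[OF assms(1) assms(2)[of "n i"] ball_sub])
      qed
      then show ?thesis using True by (simp add: ennreal_leI)
    qed simp
  qed
  finally show "tMsN X T \<phi> Z s N e \<le> (\<Sum>i. (if i \<in> I then ennreal (exp (- real (n i) * s
               + (SUP y \<in> bowen_ball X T (n i) (x i) e. \<phi> (n i) y))) else 0))" .
qed

lemma MsN_le_tMsN_shift:
  assumes "compact X" "\<And>n. continuous_on X (\<phi> n)"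
    and dk: "\<forall>n\<ge>N0. distortion X T \<phi> n e \<le> \<eta> * real n" and "N0 \<le> N"
  shows "MsN X T \<phi> Z (s + 2*\<eta>) N e \<le> tMsN X T \<phi> Z s N e"
  unfolding tMsN_def
proof (rule INF_greatest, clarify)
  fix I n x z assume cov: "is_cover X T Z N e I n x"
    and zb: "\<forall>i\<in>I. z i \<in> bowen_ball X T (n i) (x i) e"
  then have xX: "\<forall>i\<in>I. x i \<in> X" and nN: "\<forall>i\<in>I. N \<le> n i" by (auto simp: is_cover_def)
  have "MsN X T \<phi> Z (s + 2*\<eta>) N e \<le>
     (\<Sum>i. (if i \<in> I then ennreal (exp (- real (n i) * (s + 2*\<eta>)
               + (SUP y \<in> bowen_ball X T (n i) (x i) e. \<phi> (n i) y))) else 0))"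
    unfolding MsN_def
    by (rule INF_lower2[of "(I, n, x)"]) (use cov in auto)
  also have "\<dots> \<le> (\<Sum>i. (if i \<in> I then ennreal (exp (- real (n i) * s + \<phi> (n i) (z i))) else 0))"
  proof (rule suminf_le[OF _ summableI summableI])
    fix i show "(if i \<in> I then ennreal (exp (- real (n i) * (s + 2*\<eta>)
               + (SUP y \<in> bowen_ball X T (n i) (x i) e. \<phi> (n i) y))) else 0)
       \<le> (if i \<in> I then ennreal (exp (- real (n i) * s + \<phi> (n i) (z i))) else 0)"
    proof (cases "i \<in> I")
      case True
      have D: "distortion X T \<phi> (n i) e \<le> \<eta> * real (n i)"
        using dk nN True assms(4) by auto
      have "(SUP y \<in> bowen_ball X T (n i) (x i) e. \<phi> (n i) y) \<le> \<phi> (n i) (z i) + 2 * \<eta> * real (n i)"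
      proof (rule cSUP_least)
        show "bowen_ball X T (n i) (x i) e \<noteq> {}" using xX True center_in_ball by fast
      next
        fix y assume "y \<in> bowen_ball X T (n i) (x i) e"
        then have "\<bar>\<phi> (n i) (x i) - \<phi> (n i) y\<bar> \<le> distortion X T \<phi> (n i) e"
          using dist_bound[where X=X and \<phi>=\<phi> and n="n i", OF assms(1) assms(2)[of "n i"]] xX True by blast
        moreover have "\<bar>\<phi> (n i) (x i) - \<phi> (n i) (z i)\<bar> \<le> distortion X T \<phi> (n i) e"
          using dist_bound[where X=X and \<phi>=\<phi> and n="n i", OF assms(1) assms(2)[of "n i"]] xX zb True by blast
        ultimately show "\<phi> (n i) y \<le> \<phi> (n i) (z i) + 2 * \<eta> * real (n i)" using D by arith
      qed
      then have "- real (n i) * (s + 2*\<eta>) + (SUP y \<in> bowen_ball X T (n i) (x i) e. \<phi> (n i) y)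
           \<le> - real (n i) * s + \<phi> (n i) (z i)" by (simp add: algebra_simps)
      then show ?thesis using True by (simp add: ennreal_leI)
    qed simp
  qed
  finally show "MsN X T \<phi> Z (s + 2*\<eta>) N e \<le> (\<Sum>i. (if i \<in> I then ennreal (exp (- real (n i) * s + \<phi> (n i) (z i))) else 0))" .
qed

lemma tMeps_le_Meps:
  assumes "compact X" "\<And>n. continuous_on X (\<phi> n)"
  shows "tMeps X T \<phi> Z e \<le> Meps X T \<phi> Z e"
proof -
  have "tMs X T \<phi> Z s e \<le> Ms X T \<phi> Z s e" for s
    by (rule LIMSEQ_le[OF tMs_lim Ms_lim]) (use tMsN_le_MsN[of X \<phi>, OF assms] in blast)
  then have "tMs X T \<phi> Z s e = 0" if "Ms X T \<phi> Z s e = 0" for s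
    using that by (metis le_zero_eq)
  then have "{ereal s | s. Ms X T \<phi> Z s e = 0} \<subseteq> {ereal s | s. tMs X T \<phi> Z s e = 0}"
    by blast
  then show ?thesis unfolding tMeps_def Meps_def by (rule Inf_superset_mono)
qed

theorem mainTheorem2:
  fixes X Z :: "'a::metric_space set" and T :: "'a \<Rightarrow> 'a" and \<phi> :: "nat \<Rightarrow> 'a \<Rightarrow> real"
  assumes "compact X"
    and "continuous_on X T" and "T ` X \<subseteq> X"
    and "Z \<subseteq> X" and "Z \<noteq> {}"
    and "\<And>n. continuous_on X (\<phi> n)"
    and "tempered_distortion X T \<phi>"
  shows "((\<lambda>eps. tMeps X T \<phi> Z eps) \<longlongrightarrow> pressure_tB X T \<phi> Z) (at_right 0)"
proof -
  define L where "L = (INF e\<in>{0::real<..}. tMeps X T \<phi> Z e)"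
  have tlim: "((\<lambda>eps. tMeps X T \<phi> Z eps) \<longlongrightarrow> L) (at_right 0)"
  proof (rule order_tendstoI)
    fix a assume "a < L"
    show "\<forall>\<^sub>F e in at_right 0. a < tMeps X T \<phi> Z e"
      using eventually_at_right_less[of "0::real"]
    proof (rule eventually_mono)
      fix e :: real assume "0 < e"
      then have "L \<le> tMeps X T \<phi> Z e" unfolding L_def by (auto intro: INF_lower)
      then show "a < tMeps X T \<phi> Z e" using \<open>a < L\<close> by auto
    qed
  next
    fix a assume "L < a"
    then obtain e0 where e0: "0 < e0" "tMeps X T \<phi> Z e0 < a"
      unfolding L_def by (auto simp: INF_less_iff)
    show "\<forall>\<^sub>F e in at_right 0. tMeps X T \<phi> Z e < a"
      unfolding eventually_at_right[OF zero_less_one]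
    proof (intro exI[of _ e0] conjI allI impI)
      fix y :: real assume "y < e0"
      then have "tMeps X T \<phi> Z y \<le> tMeps X T \<phi> Z e0" by (intro tMeps_mono) simp
      then show "tMeps X T \<phi> Z y < a" using e0(2) by (rule le_less_trans)
    qed (use e0 in simp)
  qed
  have Mlim: "((\<lambda>eps. Meps X T \<phi> Z eps) \<longlongrightarrow> L) (at_right 0)"
  proof (rule order_tendstoI)
    fix a assume "a < L"
    show "\<forall>\<^sub>F e in at_right 0. a < Meps X T \<phi> Z e"
      using order_tendstoD(1)[OF tlim \<open>a < L\<close>]
    proof (rule eventually_mono)
      fix e assume "a < tMeps X T \<phi> Z e"
      moreover have "tMeps X T \<phi> Z e \<le> Meps X T \<phi> Z e" by (rule tMeps_le_Meps[OF assms(1,6)])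
      ultimately show "a < Meps X T \<phi> Z e" by (rule less_le_trans)
    qed
  next
    fix a assume "L < a"
    then obtain c1 where c1: "L < ereal c1" "ereal c1 < a" using ereal_dense2 by blast
    then obtain c2 where c2: "ereal c1 < ereal c2" "ereal c2 < a" using ereal_dense2 by blast
    define \<eta> where "\<eta> = (c2 - c1) / 2"
    have "\<eta> > 0" using c2 by (simp add: \<eta>_def)
    have ev1: "\<forall>\<^sub>F e in at_right 0. tMeps X T \<phi> Z e < ereal c1"
      using order_tendstoD(2)[OF tlim c1(1)] .
    have ev2: "\<forall>\<^sub>F e in at_right 0. limsup (\<lambda>n. ereal (distortion X T \<phi> n e / real n)) < ereal \<eta>"
      using order_tendstoD(2)[OF assms(7)[unfolded tempered_distortion_def]] \<open>\<eta> > 0\<close> by simp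
    show "\<forall>\<^sub>F e in at_right 0. Meps X T \<phi> Z e < a"
      using ev1 ev2
    proof (rule eventually_elim2)
      fix e assume h1: "tMeps X T \<phi> Z e < ereal c1"
        and h2: "limsup (\<lambda>n. ereal (distortion X T \<phi> n e / real n)) < ereal \<eta>"
      from Limsup_lessD[OF h2] obtain N1 where N1: "\<forall>n\<ge>N1. distortion X T \<phi> n e / real n < \<eta>"
        unfolding eventually_sequentially by auto
      define N0 where "N0 = max N1 1"
      have dk: "\<forall>n\<ge>N0. distortion X T \<phi> n e \<le> \<eta> * real n"
      proof (intro allI impI)
        fix n assume "N0 \<le> n"
        then have "n \<ge> N1" "real n > 0" by (auto simp: N0_def)
        then show "distortion X T \<phi> n e \<le> \<eta> * real n"
          using N1 by (auto simp: pos_divide_less_eq less_imp_le mult.commute)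
      qed
      from h1 obtain t where t: "tMs X T \<phi> Z t e = 0" "ereal t < ereal c1"
        unfolding tMeps_def by (auto simp: Inf_less_iff)
      have "Ms X T \<phi> Z (t + 2*\<eta>) e \<le> tMs X T \<phi> Z t e"
        by (rule LIMSEQ_le[OF Ms_lim tMs_lim]) (use MsN_le_tMsN_shift[OF assms(1,6) dk] in blast)
      then have "Ms X T \<phi> Z (t + 2*\<eta>) e = 0" using t by simp
      then have "Meps X T \<phi> Z e \<le> ereal (t + 2*\<eta>)" unfolding Meps_def by (auto intro: Inf_lower)
      also have "\<dots> < ereal c2" using t(2) by (simp add: \<eta>_def field_simps)
      finally show "Meps X T \<phi> Z e < a" using c2(2) by simp
    qed
  qed
  have "pressure_tB X T \<phi> Z = L"
    unfolding pressure_tB_def by (rule tendsto_Lim[OF trivial_limit_at_right_real Mlim])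
  then show ?thesis using tlim by simp
qed

end
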